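(* For every positive integer $n$ and every permutation $\pi:Q_n\to Q_n$ of $Q_n=\{q_1,\dots,q_n\}$ there is a word $\alpha_\pi\in\Sigma_n^*$ such that for all $q,q'\in Q_n$: there exists $w\in\{1\}^*$ with $\langle q,\langle\alpha_\pi,w\rangle,q'\rangle\in\Delta_n^*$ if and only if $q'=\pi(q)$.
   Context: Let $\Sigma_n=\{a_1,\dots,a_n\}$, output monoid the free monoid $\{1\}^*$. $\mathcal{T}_n=\langle\Sigma_n^*\times\{1\}^*,Q,\{s\},\{f\},\Delta_n\rangle$ with $Q=\{s,q_1,\dots,q_n,f\}$ and $\Delta_n=\Delta_{s,n}\cup\Delta_{Q_n}\cup\Delta_{f,n}$ where: $\Delta_{s,n}=\{\langle s,\langle a_j,1^{i-1}\rangle,q_i\rangle:1\le i,j\le n\}$; $\Delta_{Q_n}$ consists, for all $1\le i,j\le n$, of $\langle q_i,\langle a_j,1^n\rangle,q_i\rangle$ if $i\notin\{1,j\}$, $\langle q_1,\langle a_j,1^{n+j-1}\rangle,q_j\rangle$ if $i=1$, and $\langle q_j,\langle a_j,1^{n-j+1}\rangle,q_1\rangle$ if $i=j\neq1$; $\Delta_{f,n}=\{\langle q_i,\langle a_j,1^{2n-i+1}\rangle,f\rangle:1\le j\le i\le n\}$. $\Delta_n^*$ is the generalized transition relation: labels (input word, concatenated output) of paths, including empty paths $\langle q,\langle\varepsilon,\varepsilon\rangle,q\rangle$. *)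

theory Defs
  imports Main
begin

text \<open>Input letter a_j is encoded by the
natural number j (alphabet {1..n}); an output word 1^k of the free monoid {1}^*
is encoded by its length k (concatenation = addition, empty word = 0).\<close>

datatype st = S | Q nat | F

inductive_set Delta :: "nat \<Rightarrow> (st \<times> nat \<times> nat \<times> st) set" for n :: nat where
  d_start: "\<lbrakk>1 \<le> i; i \<le> n; 1 \<le> j; j \<le> n\<rbrakk> \<Longrightarrow> (S, j, i - 1, Q i) \<in> Delta n"
| d_loop: "\<lbrakk>1 \<le> i; i \<le> n; 1 \<le> j; j \<le> n; i \<noteq> 1; i \<noteq> j\<rbrakk> \<Longrightarrow> (Q i, j, n, Q i) \<in> Delta n"
| d_from1: "\<lbrakk>1 \<le> j; j \<le> n\<rbrakk> \<Longrightarrow> (Q 1, j, n + j - 1, Q j) \<in> Delta n"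
| d_back: "\<lbrakk>1 \<le> j; j \<le> n; j \<noteq> 1\<rbrakk> \<Longrightarrow> (Q j, j, n - j + 1, Q 1) \<in> Delta n"
| d_final: "\<lbrakk>1 \<le> j; j \<le> i; i \<le> n\<rbrakk> \<Longrightarrow> (Q i, j, 2 * n - i + 1, F) \<in> Delta n"

inductive Delta_star :: "nat \<Rightarrow> st \<Rightarrow> nat list \<Rightarrow> nat \<Rightarrow> st \<Rightarrow> bool" for n :: nat where
  ds_empty: "Delta_star n q [] 0 q"
| ds_step: "\<lbrakk>(q, a, k, q') \<in> Delta n; Delta_star n q' u m q''\<rbrakk> \<Longrightarrow> Delta_star n q (a # u) (k + m) q''"

end

theory Submission
  imports Defs "HOL-Combinatorics.Permutations"
begin

definition act :: "nat \<Rightarrow> nat \<Rightarrow> nat" where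
  "act x a = (if x = 1 then a else if x = a then 1 else x)"

lemma delta_QQ: "(Q i, a, k, Q j) \<in> Delta n \<Longrightarrow> j = act i a"
  by (erule Delta.cases) (auto simp: act_def)

lemma delta_ex: "1 \<le> i \<Longrightarrow> i \<le> n \<Longrightarrow> 1 \<le> a \<Longrightarrow> a \<le> n \<Longrightarrow>
   \<exists>k. (Q i, a, k, Q (act i a)) \<in> Delta n"
proof -
  assume h: "1 \<le> i" "i \<le> n" "1 \<le> a" "a \<le> n"
  show ?thesis
  proof (cases "i = 1")
    case True
    then show ?thesis using Delta.d_from1[of a n] h by (auto simp: act_def)
  next
    case F: False
    show ?thesis
    proof (cases "i = a")
      case True
      then show ?thesis using Delta.d_back[of a n] h F by (auto simp: act_def)
    next
      case False
      then show ?thesis using Delta.d_loop[of i n a] h F by (auto simp: act_def)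
    qed
  qed
qed

lemma act_range: "1 \<le> i \<Longrightarrow> i \<le> n \<Longrightarrow> 1 \<le> a \<Longrightarrow> a \<le> n \<Longrightarrow> act i a \<in> {1..n}"
  by (auto simp: act_def)

lemma from_F: "Delta_star n q u m q' \<Longrightarrow> q = F \<Longrightarrow> q' = F"
  by (induction rule: Delta_star.induct) (auto elim: Delta.cases)

lemma star_det: "Delta_star n q u m q' \<Longrightarrow> q = Q i \<Longrightarrow> q' = Q j \<Longrightarrow> j = foldl act i u"
proof (induction arbitrary: i rule: Delta_star.induct)
  case (ds_empty q) then show ?case by simp
next
  case (ds_step q a k q' u m q'')
  show ?case
  proof (cases q')
    case S with ds_step show ?thesis by (auto elim: Delta.cases)
  next
    case F with ds_step from_F show ?thesis by blast
  next
    case (Q i')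
    with ds_step delta_QQ show ?thesis by auto
  qed
qed

lemma star_ex: "\<alpha> \<in> lists {1..n} \<Longrightarrow> i \<in> {1..n} \<Longrightarrow>
   \<exists>w. Delta_star n (Q i) \<alpha> w (Q (foldl act i \<alpha>))"
proof (induction \<alpha> arbitrary: i)
  case Nil then show ?case by (auto intro: ds_empty)
next
  case (Cons a u)
  then have a: "a \<in> {1..n}" and u: "u \<in> lists {1..n}" by auto
  from Cons.prems a obtain k where k: "(Q i, a, k, Q (act i a)) \<in> Delta n"
    using delta_ex by fastforce
  from Cons.IH[OF u] act_range a Cons.prems obtain w where
    "Delta_star n (Q (act i a)) u w (Q (foldl act (act i a) u))" by fastforce
  with k show ?case by (auto intro: ds_step)
qed

lemma transp_word: "a \<in> {1..n} \<Longrightarrow> b \<in> {1..n} \<Longrightarrow> a \<noteq> b \<Longrightarrow>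
  \<exists>\<beta> \<in> lists {1..n}. \<forall>x. foldl act x \<beta> = Transposition.transpose a b x"
proof -
  assume a: "a \<in> {1..n}" and b: "b \<in> {1..n}" and ab: "a \<noteq> b"
  show ?thesis
  proof (cases "a = 1 \<or> b = 1")
    case True
    show ?thesis
    proof (cases "a = 1")
      case True
      then show ?thesis using b ab
        by (intro bexI[of _ "[b]"]) (auto simp: act_def Transposition.transpose_def)
    next
      case False
      then have "b = 1" using \<open>a = 1 \<or> b = 1\<close> by simp
      then show ?thesis using a ab
        by (intro bexI[of _ "[a]"]) (auto simp: act_def Transposition.transpose_def)
    qed
  next
    case False
    then show ?thesis using a b ab
      by (intro bexI[of _ "[a,b,a]"]) (auto simp: act_def Transposition.transpose_def)
  qed
qed

lemma perm_word: assumes "p permutes {1..n}" shows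
  "\<exists>\<alpha> \<in> lists {1..n}. \<forall>i \<in> {1..n}. foldl act i \<alpha> = p i"
  using assms finite_atLeastAtMost[of 1 n]
proof (induction rule: permutes_induct)
  case id show ?case by (intro bexI[of _ "[]"]) auto
next
  case (swap a b p)
  from swap.IH obtain \<alpha> where al: "\<alpha> \<in> lists {1..n}" "\<forall>i \<in> {1..n}. foldl act i \<alpha> = p i"
    by blast
  from transp_word[OF swap.hyps(1,2,3)] obtain \<beta> where
    be: "\<beta> \<in> lists {1..n}" "\<forall>x. foldl act x \<beta> = Transposition.transpose a b x" by blast
  show ?case using al be by (intro bexI[of _ "\<alpha> @ \<beta>"]) auto
qed

theorem lemma10:
  fixes n :: nat and \<pi> :: "nat \<Rightarrow> nat"
  assumes "1 \<le> n"
    and "bij_betw \<pi> {1..n} {1..n}"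
  shows "\<exists>\<alpha> \<in> lists {1..n}. \<forall>i \<in> {1..n}. \<forall>j \<in> {1..n}.
           (\<exists>w. Delta_star n (Q i) \<alpha> w (Q j)) \<longleftrightarrow> j = \<pi> i"
proof -
  define p where "p = (\<lambda>x. if x \<in> {1..n} then \<pi> x else x)"
  have "p permutes {1..n}"
  proof (rule bij_imp_permutes)
    show "bij_betw p {1..n} {1..n}"
      using assms(2) by (rule bij_betw_cong[THEN iffD1, rotated]) (simp add: p_def)
  qed (auto simp: p_def)
  then obtain \<alpha> where al: "\<alpha> \<in> lists {1..n}" "\<forall>i \<in> {1..n}. foldl act i \<alpha> = p i"
    using perm_word by blast
  show ?thesis
  proof (intro bexI[OF _ al(1)] ballI iffI)
    fix i j assume i: "i \<in> {1..n}" and "\<exists>w. Delta_star n (Q i) \<alpha> w (Q j)"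
    then obtain w where "Delta_star n (Q i) \<alpha> w (Q j)" by blast
    then have "j = foldl act i \<alpha>" using star_det by blast
    then show "j = \<pi> i" using al(2) i by (auto simp: p_def)
  next
    fix i j assume i: "i \<in> {1..n}" and "j = \<pi> i"
    then show "\<exists>w. Delta_star n (Q i) \<alpha> w (Q j)" using star_ex[OF al(1) i] al(2)
      by (auto simp: p_def)
  qed
qed

end
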